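(* Fix $k\in\mathbb{N}$ with $k\ge2$ and let $S=\mathbb{N}_0\cup\mathbb{R}_{\ge k}$. Then $S$ is a positive semiring that is a BFS but not an FFS.
   Context: A positive semiring is a subset of $\mathbb{R}_{\ge0}$ containing $0$ and $1$ and closed under the usual addition and multiplication. For such $S$, $S^*=S\setminus\{0\}$ is a multiplicative monoid; an atom is a nonunit $a\in S^*$ with $a=bc$ ($b,c\in S^*$) forcing $b$ or $c$ to be a unit; $S$ is atomic if every nonunit of $S^*$ is a finite product of atoms. $S$ is a BFS if it is atomic and every nonunit has a finite set of factorization lengths; $S$ is an FFS if it is atomic and every element of $S^*$ has only finitely many factorizations into atoms up to order and associates. *)

theory Defs
  imports Main "HOL-Library.Multiset" Complex_Main
begin

definition positive_semiring :: "real set \<Rightarrow> bool" where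
  "positive_semiring S \<longleftrightarrow> S \<subseteq> {0..} \<and> 0 \<in> S \<and> 1 \<in> S \<and>
     (\<forall>x\<in>S. \<forall>y\<in>S. x + y \<in> S) \<and> (\<forall>x\<in>S. \<forall>y\<in>S. x * y \<in> S)"

definition sr_unit :: "real set \<Rightarrow> real \<Rightarrow> bool" where
  "sr_unit S u \<longleftrightarrow> u \<in> S - {0} \<and> (\<exists>v\<in>S - {0}. u * v = 1)"

definition sr_atom :: "real set \<Rightarrow> real \<Rightarrow> bool" where
  "sr_atom S a \<longleftrightarrow> a \<in> S - {0} \<and> \<not> sr_unit S a \<and>
     (\<forall>b\<in>S - {0}. \<forall>c\<in>S - {0}. a = b * c \<longrightarrow> sr_unit S b \<or> sr_unit S c)"

definition sr_factorizations :: "real set \<Rightarrow> real \<Rightarrow> real multiset set" where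
  "sr_factorizations S x = {m. (\<forall>a\<in>#m. sr_atom S a) \<and> prod_mset m = x}"

definition sr_atomic :: "real set \<Rightarrow> bool" where
  "sr_atomic S \<longleftrightarrow> (\<forall>x\<in>S - {0}. \<not> sr_unit S x \<longrightarrow>
       (\<exists>m\<in>sr_factorizations S x. m \<noteq> {#}))"

definition sr_lengths :: "real set \<Rightarrow> real \<Rightarrow> nat set" where
  "sr_lengths S x = size ` sr_factorizations S x"

definition sr_BFS :: "real set \<Rightarrow> bool" where
  "sr_BFS S \<longleftrightarrow> sr_atomic S \<and>
     (\<forall>x\<in>S - {0}. \<not> sr_unit S x \<longrightarrow> finite (sr_lengths S x))"

definition sr_assoc_class :: "real set \<Rightarrow> real \<Rightarrow> real set" where
  "sr_assoc_class S a = {u * a | u. sr_unit S u}"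

definition sr_factorizations_mod_assoc :: "real set \<Rightarrow> real \<Rightarrow> real set multiset set" where
  "sr_factorizations_mod_assoc S x = image_mset (sr_assoc_class S) ` sr_factorizations S x"

definition sr_FFS :: "real set \<Rightarrow> bool" where
  "sr_FFS S \<longleftrightarrow> sr_atomic S \<and>
     (\<forall>x\<in>S - {0}. finite (sr_factorizations_mod_assoc S x))"

end

theory Submission
  imports Defs
begin

definition Sk :: "nat \<Rightarrow> real set" where
  "Sk k = {real n | n. True} \<union> {x :: real. x \<ge> real k}"

lemma Sk_mem: "x \<in> Sk k \<longleftrightarrow> (\<exists>n. x = real n) \<or> x \<ge> real k"
  unfolding Sk_def by auto

lemma Sk_ge1: assumes "k \<ge> 2" "x \<in> Sk k" "x \<noteq> 0" shows "x \<ge> 1"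
  using assms by (auto simp: Sk_mem)

lemma Sk_ge2: assumes "k \<ge> 2" "x \<in> Sk k" "x \<noteq> 0" "x \<noteq> 1" shows "x \<ge> 2"
proof -
  from assms(2) consider n where "x = real n" | "x \<ge> real k" by (auto simp: Sk_mem)
  then show ?thesis
  proof cases
    case 1 with assms(3,4) have "n \<ge> 2" by auto
    then show ?thesis using 1 by simp
  next
    case 2 then show ?thesis using assms(1) by linarith
  qed
qed

lemma Sk_unit: assumes "k \<ge> 2" shows "sr_unit (Sk k) u \<longleftrightarrow> u = 1"
proof
  assume "sr_unit (Sk k) u"
  then obtain v where u: "u \<in> Sk k" "u \<noteq> 0" and v: "v \<in> Sk k" "v \<noteq> 0" and "u * v = 1"
    unfolding sr_unit_def by auto
  moreover have "u \<ge> 1" "v \<ge> 1" using Sk_ge1[OF assms] u v by auto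
  ultimately show "u = 1"
  proof -
    have "u * v \<ge> u * 1" using \<open>u \<ge> 1\<close> \<open>v \<ge> 1\<close> by (intro mult_left_mono) auto
    with \<open>u * v = 1\<close> \<open>u \<ge> 1\<close> show "u = 1" by simp
  qed
next
  assume "u = 1"
  moreover have "(1::real) \<in> Sk k" by (simp add: Sk_mem)
  ultimately show "sr_unit (Sk k) u" unfolding sr_unit_def by force
qed

lemma Sk_semiring: assumes "k \<ge> 2" shows "positive_semiring (Sk k)"
  unfolding positive_semiring_def
proof (intro conjI ballI)
  show "Sk k \<subseteq> {0..}" by (auto simp: Sk_mem)
  show "0 \<in> Sk k" by (simp add: Sk_mem)
  show "1 \<in> Sk k" by (simp add: Sk_mem)
next
  fix x y assume x: "x \<in> Sk k" and y: "y \<in> Sk k"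
  have x0: "x \<ge> 0" and y0: "y \<ge> 0" using x y by (auto simp: Sk_mem)
  show "x + y \<in> Sk k"
  proof (cases "\<exists>n. x = real n")
    case True
    then obtain n where n: "x = real n" by auto
    show ?thesis
    proof (cases "\<exists>m. y = real m")
      case True then obtain m where "y = real m" by auto
      then show ?thesis using n by (simp add: Sk_mem) (metis of_nat_add)
    next
      case False then have "y \<ge> k" using y by (auto simp: Sk_mem)
      then show ?thesis using x0 by (simp add: Sk_mem)
    qed
  next
    case False then have "x \<ge> k" using x by (auto simp: Sk_mem)
    then show ?thesis using y0 by (simp add: Sk_mem)
  qed
  show "x * y \<in> Sk k"
  proof (cases "x = 0 \<or> y = 0")
    case True then show ?thesis by (auto simp: Sk_mem)
  next
    case False
    then have x1: "x \<ge> 1" and y1: "y \<ge> 1" using Sk_ge1[OF assms] x y by auto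
    show ?thesis
    proof (cases "\<exists>n. x = real n")
      case True
      then obtain n where n: "x = real n" by auto
      show ?thesis
      proof (cases "\<exists>m. y = real m")
        case True then obtain m where "y = real m" by auto
        then show ?thesis using n by (simp add: Sk_mem) (metis of_nat_mult)
      next
        case False then have "y \<ge> k" using y by (auto simp: Sk_mem)
        moreover have "x * y \<ge> y" using x1 y1 by (simp add: mult_le_cancel_right1)
        ultimately show ?thesis by (simp add: Sk_mem)
      qed
    next
      case False then have "x \<ge> k" using x by (auto simp: Sk_mem)
      moreover have "x * y \<ge> x" using x1 y1 by (simp add: mult_le_cancel_left1)
      ultimately show ?thesis by (simp add: Sk_mem)
    qed
  qed
qed

lemma prod_ge_pow2:
  assumes "\<forall>a\<in>#m. (a::real) \<ge> 2" shows "prod_mset m \<ge> 2 ^ size m"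
  using assms
proof (induction m)
  case empty then show ?case by simp
next
  case (add x m)
  then have "prod_mset m \<ge> 2 ^ size m" "x \<ge> 2" by auto
  moreover have "(0::real) \<le> 2 ^ size m" by simp
  ultimately have "x * prod_mset m \<ge> 2 * 2 ^ size m"
    by (metis mult_mono order_trans zero_le_numeral)
  then show ?case by simp
qed

lemma atom_ge2: assumes "k \<ge> 2" "sr_atom (Sk k) a" shows "a \<ge> 2"
  using assms Sk_ge2[OF assms(1)] Sk_unit[OF assms(1)] unfolding sr_atom_def by auto

lemma Sk_atomic: assumes "k \<ge> 2" shows "sr_atomic (Sk k)"
proof -
  have main: "\<And>x. nat \<lfloor>x\<rfloor> = N \<Longrightarrow> x \<in> Sk k \<Longrightarrow> x \<ge> 2 \<Longrightarrow>
      \<exists>m\<in>sr_factorizations (Sk k) x. m \<noteq> {#}" for N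
  proof (induction N rule: less_induct)
    case (less N x)
    show ?case
    proof (cases "sr_atom (Sk k) x")
      case True
      then show ?thesis unfolding sr_factorizations_def by (intro bexI[of _ "{#x#}"]) auto
    next
      case False
      have xn: "x \<noteq> 0" "\<not> sr_unit (Sk k) x" using less Sk_unit[OF assms] by auto
      with False obtain b c where b: "b \<in> Sk k" "b \<noteq> 0" and c: "c \<in> Sk k" "c \<noteq> 0"
        and x: "x = b * c" and bu: "\<not> sr_unit (Sk k) b" and cu: "\<not> sr_unit (Sk k) c"
        using less.prems unfolding sr_atom_def by auto
      have b2: "b \<ge> 2" and c2: "c \<ge> 2" using Sk_ge2[OF assms] b c bu cu Sk_unit[OF assms] by auto
      have "x \<ge> 2 * b" using x c2 b2 by (simp add: mult.commute mult_right_mono)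
      then have "b \<le> x - 1" using b2 by linarith
      then have "\<lfloor>b\<rfloor> \<le> \<lfloor>x - 1\<rfloor>" by (rule floor_mono)
      moreover have "0 \<le> \<lfloor>b\<rfloor>" using b2 by simp
      ultimately have "\<lfloor>b\<rfloor> < \<lfloor>x\<rfloor>" "0 \<le> \<lfloor>b\<rfloor>" by simp_all
      then have lb: "nat \<lfloor>b\<rfloor> < N" unfolding less.prems(1)[symmetric] using less.prems(3) by (simp add: nat_less_eq_zless)
      have "x \<ge> 2 * c" using x c2 b2 by (simp add: mult_right_mono)
      then have "c \<le> x - 1" using c2 by linarith
      then have "\<lfloor>c\<rfloor> \<le> \<lfloor>x - 1\<rfloor>" by (rule floor_mono)
      moreover have "0 \<le> \<lfloor>c\<rfloor>" using c2 by simp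
      ultimately have "\<lfloor>c\<rfloor> < \<lfloor>x\<rfloor>" "0 \<le> \<lfloor>c\<rfloor>" by simp_all
      then have lc: "nat \<lfloor>c\<rfloor> < N" unfolding less.prems(1)[symmetric] using less.prems(3) by (simp add: nat_less_eq_zless)
      obtain mb where "mb \<in> sr_factorizations (Sk k) b" using less.IH[OF lb refl b(1) b2] by auto
      moreover obtain mc where "mc \<in> sr_factorizations (Sk k) c" "mc \<noteq> {#}"
        using less.IH[OF lc refl c(1) c2] by auto
      ultimately show ?thesis unfolding sr_factorizations_def using x
        by (intro bexI[of _ "mb + mc"]) auto
    qed
  qed
  show ?thesis unfolding sr_atomic_def
  proof (intro ballI impI)
    fix x assume "x \<in> Sk k - {0}" "\<not> sr_unit (Sk k) x"
    then have "x \<in> Sk k" "x \<ge> 2" using Sk_ge2[OF assms] Sk_unit[OF assms] by auto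
    then show "\<exists>m\<in>sr_factorizations (Sk k) x. m \<noteq> {#}" using main by blast
  qed
qed

lemma Sk_BFS: assumes "k \<ge> 2" shows "sr_BFS (Sk k)"
  unfolding sr_BFS_def
proof (intro conjI ballI impI Sk_atomic[OF assms])
  fix x assume "x \<in> Sk k - {0}"
  have "sr_lengths (Sk k) x \<subseteq> {..nat \<lceil>x\<rceil>}"
  proof
    fix l assume "l \<in> sr_lengths (Sk k) x"
    then obtain m where m: "\<forall>a\<in>#m. sr_atom (Sk k) a" "prod_mset m = x" "l = size m"
      unfolding sr_lengths_def sr_factorizations_def by auto
    have "\<forall>a\<in>#m. a \<ge> 2" using m(1) atom_ge2[OF assms] by auto
    then have "x \<ge> 2 ^ l" using prod_ge_pow2 m by auto
    moreover have "real l < 2 ^ l"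
      by (metis of_nat_less_two_power)
    ultimately have "real l \<le> x" by linarith
    then have "int l \<le> \<lceil>x\<rceil>" by (metis ceiling_mono ceiling_of_nat)
    then show "l \<in> {..nat \<lceil>x\<rceil>}" by (simp add: le_nat_iff)
  qed
  then show "finite (sr_lengths (Sk k) x)" using finite_subset by blast
qed



lemma Sk_atom: assumes "k \<ge> 2" "real k < x" "x < real k + 1" shows "sr_atom (Sk k) x"
  unfolding sr_atom_def
proof (intro conjI ballI impI)
  show xS: "x \<in> Sk k - {0}" using assms by (auto simp: Sk_mem)
  show "\<not> sr_unit (Sk k) x" using assms Sk_unit[OF assms(1)] by auto
  fix b c assume b: "b \<in> Sk k - {0}" and c: "c \<in> Sk k - {0}" and x: "x = b * c"
  show "sr_unit (Sk k) b \<or> sr_unit (Sk k) c"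
  proof (rule ccontr)
    assume "\<not> ?thesis"
    then have "b \<noteq> 1" "c \<noteq> 1" using Sk_unit[OF assms(1)] by auto
    then have b2: "b \<ge> 2" and c2: "c \<ge> 2" using Sk_ge2[OF assms(1)] b c by auto
    have k2: "real k \<ge> 2" using assms(1) by simp
    show False
    proof (cases "c \<ge> real k")
      case True
      have "b * c \<ge> 2 * c" using b2 c2 by (intro mult_right_mono) auto
      then show False using True x assms k2 by linarith
    next
      case cF: False
      then obtain m where m: "c = real m" using c by (auto simp: Sk_mem)
      show False
      proof (cases "b \<ge> real k")
        case True
        have "b * c \<ge> b * 2" using b2 c2 by (intro mult_left_mono) auto
        then show False using True x assms k2 by linarith
      next
        case False
        then obtain n where n: "b = real n" using b by (auto simp: Sk_mem)
        have "x = real (n * m)" using x m n by simp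
        then have "k < n * m" "n * m < k + 1" using assms(2,3) by linarith+
        then show False by linarith
      qed
    qed
  qed
qed

lemma Sk_not_FFS: assumes "k \<ge> 2" shows "\<not> sr_FFS (Sk k)"
proof
  assume ffs: "sr_FFS (Sk k)"
  define X :: real where "X = (real k + 1/2)^2"
  define a :: "nat \<Rightarrow> real" where "a n = real k + 1/2 - 1 / (real n + 5)" for n
  define b :: "nat \<Rightarrow> real" where "b n = X / a n" for n
  have k2: "real k \<ge> 2" using assms by simp
  have a_lo: "a n > real k + 1/4" for n
  proof -
    have "1 / (real n + 5) \<le> 1/5" by (simp add: divide_simps)
    moreover have "1 / (real n + 5) > 0" by simp
    ultimately show ?thesis unfolding a_def by linarith
  qed
  have a_hi: "a n < real k + 1/2" for n unfolding a_def by simp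
  have apos: "a n > 0" for n using a_lo[of n] k2 by linarith
  have b_lo: "b n > real k + 1/2" for n
  proof -
    have "(real k + 1/2) * a n < (real k + 1/2) * (real k + 1/2)"
      using a_hi[of n] k2 by (intro mult_strict_left_mono) auto
    then show ?thesis unfolding b_def X_def using apos[of n]
      by (simp add: power2_eq_square pos_less_divide_eq)
  qed
  have b_hi: "b n < real k + 1" for n
  proof -
    have "X < (real k + 1) * (real k + 1/4)" unfolding X_def using k2
      by (simp add: power2_eq_square algebra_simps)
    also have "\<dots> < (real k + 1) * a n" using a_lo[of n] k2 by (intro mult_strict_left_mono) auto
    finally show ?thesis unfolding b_def using apos[of n] by (simp add: divide_less_eq mult.commute)
  qed
  have ab: "a n * b n = X" for n unfolding b_def using apos[of n] by simp
  have aatom: "sr_atom (Sk k) (a n)" for n using Sk_atom[OF assms] a_lo[of n] a_hi[of n] by simp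
  have batom: "sr_atom (Sk k) (b n)" for n using Sk_atom[OF assms] b_lo[of n] b_hi[of n] by simp
  have cls: "sr_assoc_class (Sk k) y = {y}" for y
    unfolding sr_assoc_class_def Sk_unit[OF assms] by auto
  define g where "g n = {#{a n}, {b n}#}" for n
  have "range g \<subseteq> sr_factorizations_mod_assoc (Sk k) X"
  proof
    fix z assume "z \<in> range g"
    then obtain n where z: "z = g n" by auto
    have "{#a n, b n#} \<in> sr_factorizations (Sk k) X"
      unfolding sr_factorizations_def using aatom batom ab by auto
    moreover have "z = image_mset (sr_assoc_class (Sk k)) {#a n, b n#}"
      unfolding z g_def by (simp add: cls)
    ultimately show "z \<in> sr_factorizations_mod_assoc (Sk k) X"
      unfolding sr_factorizations_mod_assoc_def by (metis image_eqI)
  qed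
  moreover have "inj g"
  proof
    fix n m assume "g n = g m"
    then have "{a n} \<in># {#{a m}, {b m}#}" unfolding g_def by (metis add_mset_commute union_single_eq_member)
    then have "a n = a m \<or> a n = b m" by auto
    moreover have "a n \<noteq> b m" using a_hi[of n] b_lo[of m] by linarith
    ultimately have "a n = a m" by simp
    then have "1 / (real n + 5) = 1 / (real m + 5)" unfolding a_def by simp
    then show "n = m" by (simp add: divide_simps)
  qed
  then have "infinite (range g)" using finite_imageD infinite_UNIV_nat by blast
  moreover have "X \<in> Sk k - {0}"
  proof -
    have "(real k + 1/2) * 1 \<le> (real k + 1/2) * (real k + 1/2)"
      using k2 by (intro mult_left_mono) auto
    then have "X \<ge> real k + 1/2" unfolding X_def by (simp add: power2_eq_square)
    then show ?thesis using k2 by (auto simp: Sk_mem)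
  qed
  ultimately show False using ffs unfolding sr_FFS_def by (meson finite_subset)
qed

theorem mainTheorem8:
  fixes k :: nat
  assumes "k \<ge> 2"
  defines "S \<equiv> {real n | n. True} \<union> {x :: real. x \<ge> real k}"
  shows "positive_semiring S \<and> sr_BFS S \<and> \<not> sr_FFS S"
proof -
  have "S = Sk k" unfolding S_def Sk_def by simp
  then show ?thesis using Sk_semiring[OF assms(1)] Sk_BFS[OF assms(1)] Sk_not_FFS[OF assms(1)] by simp
qed

end
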